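(* For all integers $d\ge 2$ and $n\ge 2$, every Latin hypercuboid in $\mathrm{LHC}(d,n,n-1)$ is completable.
   Context: $[n]=\{1,\dots,n\}$. For integers $d\ge2$ and $1\le k\le n$, $\mathrm{LHC}(d,n,k)$ denotes the set of $d$-dimensional arrays of dimensions $n\times\cdots\times n\times k$ (the last coordinate ranging over $[k]$, the others over $[n]$) with entries from $[n]$ such that each symbol occurs at most once in each axis-parallel line (a set of cells obtained by fixing all coordinates but one). A hypercuboid $H\in\mathrm{LHC}(d,n,k)$ is completable if it is contained in (i.e. equals the restriction to the first $k$ values of the last coordinate of) some array in $\mathrm{LHC}(d,n,n)$ (a Latin hypercube). *)

theory Defs
  imports Main
begin

definition cells :: "nat \<Rightarrow> nat \<Rightarrow> nat \<Rightarrow> nat list set" where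
  "cells d n k = {c. length c = d \<and> (\<forall>i < d - 1. c ! i \<in> {1..n}) \<and> c ! (d - 1) \<in> {1..k}}"

definition same_line :: "nat list \<Rightarrow> nat list \<Rightarrow> bool" where
  "same_line c c' \<longleftrightarrow> length c = length c' \<and> card {i. i < length c \<and> c ! i \<noteq> c' ! i} = 1"

definition LHC :: "nat \<Rightarrow> nat \<Rightarrow> nat \<Rightarrow> (nat list \<Rightarrow> nat) set" where
  "LHC d n k = {H. (\<forall>c \<in> cells d n k. H c \<in> {1..n})
                 \<and> (\<forall>c \<in> cells d n k. \<forall>c' \<in> cells d n k. same_line c c' \<longrightarrow> H c \<noteq> H c')}"

definition completable :: "nat \<Rightarrow> nat \<Rightarrow> nat \<Rightarrow> (nat list \<Rightarrow> nat) \<Rightarrow> bool" where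
  "completable d n k H \<longleftrightarrow> (\<exists>L \<in> LHC d n n. \<forall>c \<in> cells d n k. L c = H c)"

end

theory Submission
  imports Defs
begin

lemma same_line_I:
  assumes "length c = length c'" "i < length c" "c!i \<noteq> c'!i"
    "\<forall>j<length c. j\<noteq>i \<longrightarrow> c!j = c'!j"
  shows "same_line c c'"
proof -
  have "{j. j < length c \<and> c ! j \<noteq> c' ! j} = {i}" using assms by auto
  then show ?thesis using assms(1) unfolding same_line_def by simp
qed

lemma same_line_D:
  assumes "same_line c c'"
  shows "length c = length c' \<and> (\<exists>i<length c. c!i \<noteq> c'!i \<and> (\<forall>j<length c. j\<noteq>i \<longrightarrow> c!j = c'!j))"
proof -
  from assms have l: "length c = length c'" and "card {j. j < length c \<and> c ! j \<noteq> c' ! j} = 1"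
    unfolding same_line_def by auto
  then obtain i where "{j. j < length c \<and> c ! j \<noteq> c' ! j} = {i}" by (auto simp: card_1_singleton_iff)
  then have "i < length c" "c!i \<noteq> c'!i" "\<forall>j<length c. j\<noteq>i \<longrightarrow> c!j = c'!j" by auto
  with l show ?thesis by blast
qed

definition fib :: "nat \<Rightarrow> nat \<Rightarrow> nat list \<Rightarrow> nat list set" where
  "fib d n c = (\<lambda>t. c[d-1:=t]) ` {1..n-1}"

definition miss :: "nat \<Rightarrow> nat \<Rightarrow> (nat list \<Rightarrow> nat) \<Rightarrow> nat list \<Rightarrow> nat" where
  "miss d n H c = (THE s. s \<in> {1..n} - H ` fib d n c)"

lemma upd_cells:
  assumes "length c = d" "d \<ge> 2" "\<forall>i<d-1. c!i \<in> {1..n}" "t \<in> {1..k}"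
  shows "c[d-1:=t] \<in> cells d n k"
  using assms unfolding cells_def by auto

lemma LHC_inj:
  assumes "H \<in> LHC d n k" "c \<in> cells d n k" "c' \<in> cells d n k" "same_line c c'"
  shows "H c \<noteq> H c'"
  using assms unfolding LHC_def by blast

lemma miss_ex:
  assumes "H \<in> LHC d n (n-1)" "d \<ge> 2" "n \<ge> 2" "length c = d" "\<forall>i<d-1. c!i \<in> {1..n}"
  shows "\<exists>!s. s \<in> {1..n} - H ` fib d n c"
proof -
  have sub: "fib d n c \<subseteq> cells d n (n-1)"
    using upd_cells[OF assms(4,2,5)] unfolding fib_def by auto
  have inj1: "inj_on (\<lambda>t. c[d-1:=t]) {1..n-1}"
  proof (rule inj_onI)
    fix x y assume "c[d-1:=x] = c[d-1:=y]"
    then have "c[d-1:=x] ! (d-1) = c[d-1:=y] ! (d-1)" by simp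
    then show "x = y" using assms by simp
  qed
  have inj2: "inj_on H (fib d n c)"
  proof (rule inj_onI)
    fix x y assume xy: "x \<in> fib d n c" "y \<in> fib d n c" "H x = H y"
    then obtain t t' where x: "x = c[d-1:=t]" and y: "y = c[d-1:=t']" unfolding fib_def by auto
    show "x = y"
    proof (rule ccontr)
      assume ne: "x \<noteq> y"
      then have "t \<noteq> t'" using x y by auto
      have "same_line x y"
        apply (rule same_line_I[where i="d-1"])
        using assms x y \<open>t \<noteq> t'\<close> by (auto simp: nth_list_update)
      then show False using LHC_inj[OF assms(1)] sub xy by blast
    qed
  qed
  have "card (fib d n c) = n - 1" unfolding fib_def using card_image[OF inj1] by simp
  then have c1: "card (H ` fib d n c) = n - 1" using card_image[OF inj2] by simp
  have "H ` fib d n c \<subseteq> {1..n}" using sub assms(1) unfolding LHC_def by auto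
  then have "card ({1..n} - H ` fib d n c) = 1"
    using c1 assms(3) by (simp add: card_Diff_subset finite_subset)
  then obtain x where "{1..n} - H ` fib d n c = {x}" by (auto simp: card_1_singleton_iff)
  then show ?thesis by (metis singletonD singletonI)
qed

lemma miss_prop:
  assumes "H \<in> LHC d n (n-1)" "d \<ge> 2" "n \<ge> 2" "length c = d" "\<forall>i<d-1. c!i \<in> {1..n}"
  shows "miss d n H c \<in> {1..n}" "miss d n H c \<notin> H ` fib d n c"
  using theI'[OF miss_ex[OF assms]] unfolding miss_def by auto

lemma row_full:
  assumes "H \<in> LHC d n (n-1)" "d \<ge> 2" "n \<ge> 2" "length c = d" "\<forall>j<d-1. c!j \<in> {1..n}"
    "i < d - 1" "t \<in> {1..n-1}"
  shows "\<exists>a\<in>{1..n}. H ((c[d-1:=t])[i:=a]) = s \<or> s \<notin> {1..n}"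
proof -
  let ?R = "(\<lambda>a. (c[d-1:=t])[i:=a]) ` {1..n}"
  have sub: "?R \<subseteq> cells d n (n-1)"
    using assms unfolding cells_def by (auto simp: nth_list_update)
  have inj1: "inj_on (\<lambda>a. (c[d-1:=t])[i:=a]) {1..n}"
  proof (rule inj_onI)
    fix x y assume "(c[d-1:=t])[i:=x] = (c[d-1:=t])[i:=y]"
    then have "(c[d-1:=t])[i:=x] ! i = (c[d-1:=t])[i:=y] ! i" by simp
    then show "x = y" using assms by simp
  qed
  have inj2: "inj_on H ?R"
  proof (rule inj_onI)
    fix x y assume xy: "x \<in> ?R" "y \<in> ?R" "H x = H y"
    then obtain a b where x: "x = (c[d-1:=t])[i:=a]" and y: "y = (c[d-1:=t])[i:=b]" by auto
    show "x = y"
    proof (rule ccontr)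
      assume ne: "x \<noteq> y"
      then have "a \<noteq> b" using x y by auto
      have "same_line x y"
        apply (rule same_line_I[where i="i"])
        using assms x y \<open>a \<noteq> b\<close> by (auto simp: nth_list_update)
      then show False using LHC_inj[OF assms(1)] sub xy by blast
    qed
  qed
  have "card ?R = n" using card_image[OF inj1] by simp
  then have c1: "card (H ` ?R) = n" using card_image[OF inj2] by simp
  have "H ` ?R \<subseteq> {1..n}" using sub assms(1) unfolding LHC_def by auto
  then have hr: "H ` ?R = {1..n}" using c1 by (simp add: card_subset_eq)
  show ?thesis
  proof (cases "s \<in> {1..n}")
    case True
    then have "s \<in> H ` ?R" using \<open>H ` ?R = {1..n}\<close> by simp
    then show ?thesis by auto
  qed (use assms(3) in auto)
qed

lemma miss_distinct:
  assumes H: "H \<in> LHC d n (n-1)" and d: "d \<ge> 2" and n: "n \<ge> 2"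
    and c: "length c = d" "\<forall>j<d-1. c!j \<in> {1..n}"
    and c': "length c' = d" "\<forall>j<d-1. c'!j \<in> {1..n}"
    and i: "i < d - 1" "c!i \<noteq> c'!i" "\<forall>j<d. j\<noteq>i \<longrightarrow> c!j = c'!j"
  shows "miss d n H c \<noteq> miss d n H c'"
proof
  assume eq: "miss d n H c = miss d n H c'"
  define s where "s = miss d n H c"
  have s1: "s \<in> {1..n}" "s \<notin> H ` fib d n c" using miss_prop[OF H d n c] s_def by auto
  have s2: "s \<notin> H ` fib d n c'" using miss_prop[OF H d n c'] s_def eq by auto
  have "\<forall>t\<in>{1..n-1}. \<exists>a\<in>{1..n}. H ((c[d-1:=t])[i:=a]) = s"
    using row_full[OF H d n c i(1)] s1(1) by blast
  then obtain f where f: "\<forall>t\<in>{1..n-1}. f t \<in> {1..n} \<and> H ((c[d-1:=t])[i:=f t]) = s"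
    by metis
  have f1: "f t \<noteq> c!i" if t: "t \<in> {1..n-1}" for t
  proof
    assume "f t = c!i"
    then have "(c[d-1:=t])[i:=f t] = c[d-1:=t]" using i(1) c
      by (intro nth_equalityI) (auto simp: nth_list_update)
    moreover have "c[d-1:=t] \<in> fib d n c" using t unfolding fib_def by auto
    ultimately show False using f t s1(2) by force
  qed
  have f2: "f t \<noteq> c'!i" if t: "t \<in> {1..n-1}" for t
  proof
    assume "f t = c'!i"
    then have "(c[d-1:=t])[i:=f t] = c'[d-1:=t]" using i c c'
      by (intro nth_equalityI) (auto simp: nth_list_update)
    moreover have "c'[d-1:=t] \<in> fib d n c'" using t unfolding fib_def by auto
    ultimately show False using f t s2 by force
  qed
  have finj: "inj_on f {1..n-1}"
  proof (rule inj_onI)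
    fix t t' assume tt: "t \<in> {1..n-1}" "t' \<in> {1..n-1}" "f t = f t'"
    show "t = t'"
    proof (rule ccontr)
      assume ne: "t \<noteq> t'"
      have "same_line ((c[d-1:=t])[i:=f t]) (c[d-1:=t', i:=f t'])"
        apply (rule same_line_I[where i="d-1"])
        using c i tt ne by (auto simp: nth_list_update)
      moreover have "(c[d-1:=t])[i:=f t] \<in> cells d n (n-1)" "c[d-1:=t', i:=f t'] \<in> cells d n (n-1)"
        using c i tt f unfolding cells_def by (auto simp: nth_list_update)
      ultimately show False using LHC_inj[OF H] f tt by metis
    qed
  qed
  have "f ` {1..n-1} \<subseteq> {1..n} - {c!i, c'!i}" using f f1 f2 by auto
  then have "card (f ` {1..n-1}) \<le> card ({1..n} - {c!i, c'!i})" by (intro card_mono) auto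
  moreover have "card (f ` {1..n-1}) = n - 1" using card_image[OF finj] by simp
  moreover have "card ({1..n} - {c!i, c'!i}) = n - 2"
    using c(2) c'(2) i by (subst card_Diff_subset) auto
  ultimately show False using n by simp
qed


lemma mixed_case:
  assumes H: "H \<in> LHC d n (n-1)" and d: "d \<ge> 2" and n: "n \<ge> 2"
    and c: "c \<in> cells d n n" and c': "c' \<in> cells d n n"
    and cn: "\<not> c!(d-1) \<le> n-1" and c'n: "c'!(d-1) \<le> n-1"
    and sl: "same_line c c'"
  shows "miss d n H c \<noteq> H c'"
proof -
  have lc: "length c = d" "\<forall>j<d-1. c!j \<in> {1..n}" using c unfolding cells_def by auto
  have lc': "length c' = d" "c'!(d-1) \<in> {1..n}" using c' unfolding cells_def by auto
  obtain i where i: "i < d" "c!i \<noteq> c'!i" "\<forall>j<d. j\<noteq>i \<longrightarrow> c!j = c'!j"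
    using same_line_D[OF sl] lc by auto
  have "i = d - 1"
  proof (rule ccontr)
    assume "i \<noteq> d - 1"
    then have "c!(d-1) = c'!(d-1)" using i(3) d by auto
    then show False using cn c'n by simp
  qed
  then have "c' = c[d-1 := c'!(d-1)]" using i lc lc'
    by (intro nth_equalityI) (auto simp: nth_list_update)
  moreover have "c'!(d-1) \<in> {1..n-1}" using lc' c'n by auto
  ultimately have "c' \<in> fib d n c" unfolding fib_def by blast
  then show ?thesis using miss_prop(2)[OF H d n lc] by auto
qed

theorem mainTheorem4:
  fixes d n :: nat and H :: "nat list \<Rightarrow> nat"
  assumes "d \<ge> 2" and "n \<ge> 2" and "H \<in> LHC d n (n - 1)"
  shows "completable d n (n - 1) H"
proof -
  note H = assms(3) and d = assms(1) and n = assms(2)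
  define L where "L = (\<lambda>c. if c!(d-1) \<le> n-1 then H c else miss d n H c)"
  have low: "c \<in> cells d n (n-1)" if "c \<in> cells d n n" "c!(d-1) \<le> n-1" for c
    using that unfolding cells_def by auto
  have agree: "\<forall>c \<in> cells d n (n-1). L c = H c"
    unfolding L_def cells_def by auto
  have range: "\<forall>c \<in> cells d n n. L c \<in> {1..n}"
  proof
    fix c assume c: "c \<in> cells d n n"
    show "L c \<in> {1..n}"
    proof (cases "c!(d-1) \<le> n-1")
      case True
      then show ?thesis using low[OF c True] H unfolding L_def LHC_def by auto
    next
      case False
      have "length c = d" "\<forall>j<d-1. c!j \<in> {1..n}" using c unfolding cells_def by auto
      then show ?thesis using False miss_prop(1)[OF H d n] unfolding L_def by auto
    qed
  qed
  have latin: "\<forall>c \<in> cells d n n. \<forall>c' \<in> cells d n n. same_line c c' \<longrightarrow> L c \<noteq> L c'"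
  proof (intro ballI impI)
    fix c c' assume c: "c \<in> cells d n n" and c': "c' \<in> cells d n n" and sl: "same_line c c'"
    have lc: "length c = d" "\<forall>j<d-1. c!j \<in> {1..n}" "c!(d-1) \<in> {1..n}"
      using c unfolding cells_def by auto
    have lc': "length c' = d" "\<forall>j<d-1. c'!j \<in> {1..n}" "c'!(d-1) \<in> {1..n}"
      using c' unfolding cells_def by auto
    have sl': "same_line c' c" 
    proof -
      obtain i where i: "i < d" "c!i \<noteq> c'!i" "\<forall>j<d. j\<noteq>i \<longrightarrow> c!j = c'!j"
        using same_line_D[OF sl] lc by auto
      show ?thesis by (rule same_line_I[where i=i]) (use i lc lc' in auto)
    qed
    show "L c \<noteq> L c'"
    proof (cases "c!(d-1) \<le> n-1"; cases "c'!(d-1) \<le> n-1")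
      assume a: "c!(d-1) \<le> n-1" "c'!(d-1) \<le> n-1"
      then show ?thesis using LHC_inj[OF H low[OF c] low[OF c'] sl] unfolding L_def by auto
    next
      assume a: "c!(d-1) \<le> n-1" "\<not> c'!(d-1) \<le> n-1"
      then show ?thesis using mixed_case[OF H d n c' c _ _ sl'] unfolding L_def by auto
    next
      assume a: "\<not> c!(d-1) \<le> n-1" "c'!(d-1) \<le> n-1"
      then show ?thesis using mixed_case[OF H d n c c' _ _ sl] unfolding L_def by auto
    next
      assume a: "\<not> c!(d-1) \<le> n-1" "\<not> c'!(d-1) \<le> n-1"
      then have eqn: "c!(d-1) = c'!(d-1)" using lc lc' by auto
      obtain i where i: "i < d" "c!i \<noteq> c'!i" "\<forall>j<d. j\<noteq>i \<longrightarrow> c!j = c'!j"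
        using same_line_D[OF sl] lc by auto
      have "i \<noteq> d - 1" using i eqn by auto
      then have "i < d - 1" using i by auto
      then show ?thesis using miss_distinct[OF H d n lc(1,2) lc'(1,2) _ i(2,3)] a
        unfolding L_def by auto
    qed
  qed
  have "L \<in> LHC d n n" unfolding LHC_def using range latin by blast
  then show ?thesis unfolding completable_def using agree by blast
qed

end
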